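(* Consider the system of ordinary differential equations in $\mathbb{R}^3$ $$\dot x = \vartheta,\qquad \dot\vartheta = -\lambda\vartheta - xu + x - x^3,\qquad \dot u = -\alpha u - \beta x\vartheta,$$ with real parameters $\alpha>0$, $\lambda = 0$ and $\beta>0$. Then every separatrix of the saddle $x=\vartheta=u=0$, i.e. every solution $(x(t),\vartheta(t),u(t))$, not identically zero, with $$\lim_{t\to-\infty}x(t)=\lim_{t\to-\infty}\vartheta(t)=\lim_{t\to-\infty}u(t)=0,$$ tends to infinity as $t\to+\infty$ (it has no $\omega$-limit points).
   Context: For $\alpha>0$, $\lambda=0$ the origin is a saddle equilibrium with a one-dimensional unstable manifold (eigenvalues $1,-1,-\alpha$); a separatrix is a nontrivial solution lying on this unstable manifold. *)

theory Defs
  imports "HOL-Analysis.Analysis"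
begin

definition rhs :: "real \<Rightarrow> real \<Rightarrow> real \<Rightarrow> real \<times> real \<times> real \<Rightarrow> real \<times> real \<times> real" where
  "rhs \<alpha> lam \<beta> p = (case p of (x, \<theta>, u) \<Rightarrow>
      (\<theta>, - lam * \<theta> - x * u + x - x ^ 3, - \<alpha> * u - \<beta> * x * \<theta>))"

definition solves_on :: "real \<Rightarrow> real \<Rightarrow> real \<Rightarrow> (real \<Rightarrow> real \<times> real \<times> real) \<Rightarrow> real set \<Rightarrow> bool" where
  "solves_on \<alpha> lam \<beta> \<phi> T \<longleftrightarrow>
     (\<forall>t\<in>T. (\<phi> has_vector_derivative rhs \<alpha> lam \<beta> (\<phi> t)) (at t))"

text \<open>Filter for approaching the right end b of the existence interval (-inf, b).\<close>
definition right_end :: "ereal \<Rightarrow> real filter" where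
  "right_end b = (if b = \<infinity> then at_top else at_left (real_of_ereal b))"

end

theory Submission
  imports Defs
begin


lemma hvd_fst: "(f has_vector_derivative v) F \<Longrightarrow> ((\<lambda>t. fst (f t)) has_vector_derivative fst v) F"
  unfolding has_vector_derivative_def by (drule has_derivative_fst) simp

lemma hvd_snd: "(f has_vector_derivative v) F \<Longrightarrow> ((\<lambda>t. snd (f t)) has_vector_derivative snd v) F"
  unfolding has_vector_derivative_def by (drule has_derivative_snd) simp

definition En :: "real \<Rightarrow> real \<times> real \<times> real \<Rightarrow> real" where
  "En \<beta> p = (case p of (x, th, u) \<Rightarrow> th^2/2 - x^2/2 + x^4/4 - u^2/(2*\<beta>))"

lemma comp_deriv:
  assumes "(\<phi> has_vector_derivative rhs \<alpha> 0 \<beta> (\<phi> t)) F"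
  shows "((\<lambda>t. fst (\<phi> t)) has_real_derivative fst (snd (\<phi> t))) F"
    "((\<lambda>t. fst (snd (\<phi> t))) has_real_derivative 
        (- fst (\<phi> t) * snd (snd (\<phi> t)) + fst (\<phi> t) - fst (\<phi> t)^3)) F"
    "((\<lambda>t. snd (snd (\<phi> t))) has_real_derivative 
        (- \<alpha> * snd (snd (\<phi> t)) - \<beta> * fst (\<phi> t) * fst (snd (\<phi> t)))) F"
proof -
  obtain x th u where p: "\<phi> t = (x, th, u)" by (cases "\<phi> t") auto
  have r: "rhs \<alpha> 0 \<beta> (\<phi> t) = (th, - x * u + x - x ^ 3, - \<alpha> * u - \<beta> * x * th)"
    unfolding rhs_def p by simp
  show "((\<lambda>t. fst (\<phi> t)) has_real_derivative fst (snd (\<phi> t))) F"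
    using hvd_fst[OF assms] unfolding r p has_real_derivative_iff_has_vector_derivative by (simp add: rhs_def)
  show "((\<lambda>t. fst (snd (\<phi> t))) has_real_derivative 
        (- fst (\<phi> t) * snd (snd (\<phi> t)) + fst (\<phi> t) - fst (\<phi> t)^3)) F"
    using hvd_fst[OF hvd_snd[OF assms]] unfolding r p has_real_derivative_iff_has_vector_derivative by (simp add: rhs_def)
  show "((\<lambda>t. snd (snd (\<phi> t))) has_real_derivative 
        (- \<alpha> * snd (snd (\<phi> t)) - \<beta> * fst (\<phi> t) * fst (snd (\<phi> t)))) F"
    using hvd_snd[OF hvd_snd[OF assms]] unfolding r p has_real_derivative_iff_has_vector_derivative by (simp add: rhs_def)
qed

lemma En_deriv:
  assumes "(\<phi> has_vector_derivative rhs \<alpha> 0 \<beta> (\<phi> t)) (at t within S)" "\<beta> > 0"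
  shows "((\<lambda>t. En \<beta> (\<phi> t)) has_real_derivative \<alpha> / \<beta> * (snd (snd (\<phi> t)))^2) (at t within S)"
proof -
  note d = comp_deriv[OF assms(1)]
  define x where "x = (\<lambda>t. fst (\<phi> t))"
  define th where "th = (\<lambda>t. fst (snd (\<phi> t)))"
  define u where "u = (\<lambda>t. snd (snd (\<phi> t)))"
  have dx: "(x has_real_derivative th t) (at t within S)" using d(1) unfolding x_def th_def .
  have dth: "(th has_real_derivative (- x t * u t + x t - x t^3)) (at t within S)" using d(2) unfolding x_def th_def u_def .
  have du: "(u has_real_derivative (- \<alpha> * u t - \<beta> * x t * th t)) (at t within S)" using d(3) unfolding x_def th_def u_def .
  have e: "(\<lambda>t. En \<beta> (\<phi> t)) = (\<lambda>t. (th t * th t) * (1/2) - (x t * x t) * (1/2) + (x t * x t) * (x t * x t) * (1/4) - (u t * u t) * (1/(2*\<beta>)))"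
    by (auto simp: En_def x_def th_def u_def power2_eq_square power4_eq_xxxx split: prod.splits)
  have "((\<lambda>t. (th t * th t) * (1/2) - (x t * x t) * (1/2) + (x t * x t) * (x t * x t) * (1/4) - (u t * u t) * (1/(2*\<beta>)))
     has_real_derivative
      ((th t * (- x t * u t + x t - x t^3) + (- x t * u t + x t - x t^3) * th t) * (1/2) - (x t * th t + th t * x t) * (1/2)
       + ((x t * x t) * (x t * th t + th t * x t) + (x t * th t + th t * x t) * (x t * x t)) * (1/4)
       - (u t * (- \<alpha> * u t - \<beta> * x t * th t) + (- \<alpha> * u t - \<beta> * x t * th t) * u t) * (1/(2*\<beta>)))) (at t within S)"
    by (intro DERIV_diff DERIV_add DERIV_cmult_right DERIV_mult' dx dth du)
  then show ?thesis unfolding e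
    apply (rule DERIV_cong)
    using assms(2) by (simp add: u_def field_simps power2_eq_square power3_eq_cube)
qed



lemma prod_bnd:
  fixes a b c d :: real
  assumes "\<bar>a\<bar> \<le> R" "\<bar>d\<bar> \<le> R" "\<bar>b - d\<bar> \<le> e" "\<bar>a - c\<bar> \<le> e"
  shows "\<bar>a * b - c * d\<bar> \<le> 2 * R * e"
proof -
  have "a * b - c * d = a * (b - d) + d * (a - c)" by (simp add: algebra_simps)
  also have "\<bar>\<dots>\<bar> \<le> \<bar>a\<bar> * \<bar>b - d\<bar> + \<bar>d\<bar> * \<bar>a - c\<bar>" by (metis abs_mult abs_triangle_ineq)
  also have "\<dots> \<le> R * e + R * e" by (intro add_mono mult_mono) (use assms in auto)
  finally show ?thesis by simp
qed

lemma cube_bnd: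
  fixes a c :: real
  assumes "\<bar>a\<bar> \<le> R" "\<bar>c\<bar> \<le> R" "\<bar>a - c\<bar> \<le> e"
  shows "\<bar>a^3 - c^3\<bar> \<le> 3 * R^2 * e"
proof -
  have "a^3 - c^3 = (a - c) * (a*a + a*c + c*c)" by (simp add: algebra_simps power3_eq_cube)
  have h: "\<bar>a*a + a*c + c*c\<bar> \<le> 3 * R^2"
  proof -
    have "\<bar>a*a + a*c + c*c\<bar> \<le> \<bar>a\<bar>*\<bar>a\<bar> + \<bar>a\<bar>*\<bar>c\<bar> + \<bar>c\<bar>*\<bar>c\<bar>" by (simp add: abs_mult[symmetric] abs_triangle_ineq order_trans[OF abs_triangle_ineq])
    also have "\<dots> \<le> R*R + R*R + R*R" by (intro add_mono mult_mono) (use assms in auto)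
    finally show ?thesis by (simp add: power2_eq_square)
  qed
  have "\<bar>a^3 - c^3\<bar> = \<bar>a - c\<bar> * \<bar>a*a + a*c + c*c\<bar>" by (simp add: \<open>a^3 - c^3 = _\<close> abs_mult)
  also have "\<dots> \<le> e * (3 * R^2)" by (intro mult_mono h) (use assms in auto)
  finally show ?thesis by (simp add: mult.commute)
qed

definition Lc :: "real \<Rightarrow> real \<Rightarrow> real \<Rightarrow> real" where
  "Lc \<alpha> \<beta> R = 2 + \<alpha> + (2 + 2 * \<beta>) * R + 3 * R^2"

lemma norm3_le: "norm ((a::real), (b::real), (c::real)) \<le> \<bar>a\<bar> + \<bar>b\<bar> + \<bar>c\<bar>"
proof -
  have "norm (a, b, c) \<le> norm a + norm (b, c)" by (rule norm_Pair_le)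
  also have "norm (b, c) \<le> norm b + norm c" by (rule norm_Pair_le)
  finally show ?thesis by simp
qed

lemma comp_le:
  fixes p :: "real \<times> real \<times> real"
  shows "\<bar>fst p\<bar> \<le> norm p" "\<bar>fst (snd p)\<bar> \<le> norm p" "\<bar>snd (snd p)\<bar> \<le> norm p"
proof -
  obtain a b c where p: "p = (a,b,c)" by (cases p) auto
  show "\<bar>fst p\<bar> \<le> norm p" using norm_fst_le[of a "(b,c)"] p by simp
  show "\<bar>fst (snd p)\<bar> \<le> norm p" using norm_fst_le[of b c] norm_snd_le[of "(b,c)" a] p by simp
  show "\<bar>snd (snd p)\<bar> \<le> norm p" using norm_snd_le[of c b] norm_snd_le[of "(b,c)" a] p by simp
qed

lemma lip:
  fixes p q :: "real \<times> real \<times> real"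
  assumes "\<alpha> \<ge> 0" "\<beta> \<ge> 0" "norm p \<le> R" "norm q \<le> R"
  shows "norm (rhs \<alpha> 0 \<beta> p - rhs \<alpha> 0 \<beta> q) \<le> Lc \<alpha> \<beta> R * norm (p - q)"
proof -
  obtain x1 t1 u1 where p: "p = (x1, t1, u1)" by (cases p) auto
  obtain x2 t2 u2 where q: "q = (x2, t2, u2)" by (cases q) auto
  define d where "d = norm (p - q)"
  have dx: "\<bar>x1 - x2\<bar> \<le> d" "\<bar>t1 - t2\<bar> \<le> d" "\<bar>u1 - u2\<bar> \<le> d"
    using comp_le[of "p - q"] unfolding d_def p q by auto
  have bx: "\<bar>x1\<bar> \<le> R" "\<bar>t1\<bar> \<le> R" "\<bar>u1\<bar> \<le> R" "\<bar>x2\<bar> \<le> R" "\<bar>t2\<bar> \<le> R" "\<bar>u2\<bar> \<le> R"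
    using comp_le[of p] comp_le[of q] assms(3,4) unfolding p q by auto
  have R0: "R \<ge> 0" using bx by linarith
  have e1: "\<bar>x1*u1 - x2*u2\<bar> \<le> 2*R*d" by (rule prod_bnd) (use bx dx in auto)
  have e2: "\<bar>x1*t1 - x2*t2\<bar> \<le> 2*R*d" by (rule prod_bnd) (use bx dx in auto)
  have e3: "\<bar>x1^3 - x2^3\<bar> \<le> 3*R^2*d" by (rule cube_bnd) (use bx dx in auto)
  have "rhs \<alpha> 0 \<beta> p - rhs \<alpha> 0 \<beta> q = (t1 - t2, - (x1*u1 - x2*u2) + (x1 - x2) - (x1^3 - x2^3),
           - \<alpha> * (u1 - u2) - \<beta> * (x1*t1 - x2*t2))"
    unfolding p q rhs_def by (simp add: algebra_simps)
  hence "norm (rhs \<alpha> 0 \<beta> p - rhs \<alpha> 0 \<beta> q) \<le> \<bar>t1 - t2\<bar> + \<bar>- (x1*u1 - x2*u2) + (x1 - x2) - (x1^3 - x2^3)\<bar>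
           + \<bar>- \<alpha> * (u1 - u2) - \<beta> * (x1*t1 - x2*t2)\<bar>" using norm3_le by metis
  also have "\<dots> \<le> d + (2*R*d + d + 3*R^2*d) + (\<alpha> * d + \<beta> * (2*R*d))"
  proof (intro add_mono)
    show "\<bar>t1 - t2\<bar> \<le> d" by fact
    show "\<bar>- (x1*u1 - x2*u2) + (x1 - x2) - (x1^3 - x2^3)\<bar> \<le> 2*R*d + d + 3*R^2*d"
      using e1 e3 dx(1) by linarith
    have "\<bar>\<alpha> * (u1 - u2)\<bar> \<le> \<alpha> * d" using dx(3) assms(1) by (simp add: abs_mult mult_left_mono)
    moreover have "\<bar>\<beta> * (x1*t1 - x2*t2)\<bar> \<le> \<beta> * (2*R*d)" using e2 assms(2) by (simp add: abs_mult mult_left_mono)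
    ultimately show "\<bar>- \<alpha> * (u1 - u2) - \<beta> * (x1*t1 - x2*t2)\<bar> \<le> \<alpha> * d + \<beta> * (2*R*d)" by linarith
  qed
  also have "\<dots> = Lc \<alpha> \<beta> R * d" unfolding Lc_def by (simp add: algebra_simps power2_eq_square)
  finally show ?thesis unfolding d_def .
qed

lemma rhs_zero: "rhs \<alpha> 0 \<beta> 0 = 0" by (simp add: rhs_def zero_prod_def)

lemma Lc_nonneg: "\<alpha> \<ge> 0 \<Longrightarrow> \<beta> \<ge> 0 \<Longrightarrow> R \<ge> 0 \<Longrightarrow> Lc \<alpha> \<beta> R \<ge> 0"
  unfolding Lc_def by simp

lemma bnd:
  fixes p :: "real \<times> real \<times> real"
  assumes "\<alpha> \<ge> 0" "\<beta> \<ge> 0" "norm p \<le> R"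
  shows "norm (rhs \<alpha> 0 \<beta> p) \<le> Lc \<alpha> \<beta> R * R"
proof -
  have R: "R \<ge> 0" using assms(3) norm_ge_zero order_trans by blast
  have "norm (rhs \<alpha> 0 \<beta> p) \<le> Lc \<alpha> \<beta> R * norm p" using lip[OF assms(1,2,3), of 0] R by (simp add: rhs_zero)
  also have "\<dots> \<le> Lc \<alpha> \<beta> R * R" by (rule mult_left_mono) (use assms R Lc_nonneg in auto)
  finally show ?thesis .
qed

lemma Lc_mono: "\<alpha> \<ge> 0 \<Longrightarrow> \<beta> \<ge> 0 \<Longrightarrow> 0 \<le> R \<Longrightarrow> R \<le> R' \<Longrightarrow> Lc \<alpha> \<beta> R \<le> Lc \<alpha> \<beta> R'"
  unfolding Lc_def by (intro add_mono mult_left_mono power_mono mult_mono) auto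



lemma rhs_eq: "rhs \<alpha> lam \<beta> p = (fst (snd p), - lam * fst (snd p) - fst p * snd (snd p) + fst p - fst p ^ 3,
     - \<alpha> * snd (snd p) - \<beta> * fst p * fst (snd p))"
  by (cases p) (simp add: rhs_def)

lemma cont_rhs: "continuous_on S (rhs \<alpha> lam \<beta>)"
  unfolding rhs_eq[abs_def] by (intro continuous_intros)

lemma cont_rhs_comp: "continuous_on S g \<Longrightarrow> continuous_on S (\<lambda>r. rhs \<alpha> lam \<beta> (g r))"
  using continuous_on_compose2[OF cont_rhs[of UNIV] _ subset_UNIV] by blast

definition pd :: "real \<Rightarrow> real \<Rightarrow> real \<Rightarrow> real" where
  "pd \<alpha> \<beta> M = 1 / (2 * (Lc \<alpha> \<beta> (M + 1) + Lc \<alpha> \<beta> (M + 1) * (M + 1) + 1))"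

lemma pd_pos: "\<alpha> \<ge> 0 \<Longrightarrow> \<beta> \<ge> 0 \<Longrightarrow> M \<ge> 0 \<Longrightarrow> pd \<alpha> \<beta> M > 0"
proof -
  assume a: "\<alpha> \<ge> 0" "\<beta> \<ge> 0" "M \<ge> 0"
  have "Lc \<alpha> \<beta> (M+1) \<ge> 0" using Lc_nonneg a by simp
  moreover have "Lc \<alpha> \<beta> (M+1) * (M+1) \<ge> 0" using calculation a by simp
  ultimately show ?thesis unfolding pd_def by simp
qed

lemma picard:
  fixes p :: "real \<times> real \<times> real" and t0 :: real
  assumes "\<alpha> \<ge> 0" "\<beta> \<ge> 0" "norm p \<le> M"
  shows "\<exists>y. continuous_on {t0..t0 + pd \<alpha> \<beta> M} y \<and> y t0 = p \<and>
    (\<forall>t\<in>{t0..t0 + pd \<alpha> \<beta> M}. norm (y t - p) \<le> 1) \<and>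
    (\<forall>t\<in>{t0..t0 + pd \<alpha> \<beta> M}. y t = p + integral {t0..t} (\<lambda>r. rhs \<alpha> 0 \<beta> (y r)))"
proof -
  define R where "R = M + 1"
  have M0: "M \<ge> 0" using assms(3) norm_ge_zero order_trans by blast
  have R0: "R \<ge> 0" unfolding R_def using M0 by simp
  define L where "L = Lc \<alpha> \<beta> R"
  have L0: "L \<ge> 0" unfolding L_def using Lc_nonneg assms R0 by blast
  define B where "B = L * R"
  have B0: "B \<ge> 0" unfolding B_def using L0 R0 by simp
  define \<delta> where "\<delta> = 1 / (2 * (L + B + 1))"
  have dpd: "\<delta> = pd \<alpha> \<beta> M" unfolding \<delta>_def pd_def L_def B_def R_def ..
  have d0: "\<delta> > 0" unfolding \<delta>_def using L0 B0 by simp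
  have dL: "\<delta> * L \<le> 1/2" unfolding \<delta>_def using L0 B0 by (simp add: field_simps)
  have dB: "\<delta> * B \<le> 1" unfolding \<delta>_def using L0 B0 by (simp add: field_simps)
  define cl where "cl = (\<lambda>t::real. max t0 (min t (t0 + \<delta>)))"
  have cl_in: "cl t \<in> {t0..t0+\<delta>}" for t unfolding cl_def using d0 by auto
  have cl_cont: "continuous_on UNIV cl" unfolding cl_def by (intro continuous_intros)
  have cl_id: "t \<in> {t0..t0+\<delta>} \<Longrightarrow> cl t = t" for t unfolding cl_def by auto
  define S :: "(real \<Rightarrow>\<^sub>C (real \<times> real \<times> real)) set" where "S = PiC UNIV (\<lambda>_. cball p 1)"
  define H where "H = (\<lambda>g :: real \<Rightarrow>\<^sub>C (real \<times> real \<times> real). \<lambda>t. p + integral {t0..cl t} (\<lambda>r. rhs \<alpha> 0 \<beta> (g r)))"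
  define \<Phi> where "\<Phi> = (\<lambda>g. Bcontfun (H g))"
  have inS: "g \<in> S \<longleftrightarrow> (\<forall>t. norm (g t - p) \<le> 1)" for g
    unfolding S_def mem_PiC_iff by (auto simp: dist_norm norm_minus_commute)
  have normR: "g \<in> S \<Longrightarrow> norm (g t) \<le> R" for g t
  proof -
    assume "g \<in> S"
    hence "norm (g t - p) \<le> 1" using inS by blast
    moreover have "norm (g t) \<le> norm p + norm (g t - p)" by (rule norm_triangle_sub)
    ultimately show ?thesis unfolding R_def using assms(3) by linarith
  qed
  have Fc: "continuous_on A (\<lambda>r. rhs \<alpha> 0 \<beta> (apply_bcontfun g r))" for g A
    by (rule cont_rhs_comp) simp
  have intb: "norm (integral {t0..c} (\<lambda>r. rhs \<alpha> 0 \<beta> (g r))) \<le> B * (c - t0)"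
    if "g \<in> S" "t0 \<le> c" for g c
    by (rule integral_bound) (use that Fc bnd[OF assms(1,2) normR] in \<open>auto simp: B_def L_def\<close>)
  have Hin: "H g \<in> bcontfun" "\<forall>t. norm (H g t - p) \<le> 1" if "g \<in> S" for g
  proof -
    have c1: "continuous_on {t0..t0+\<delta>} (\<lambda>x. integral {t0..x} (\<lambda>r. rhs \<alpha> 0 \<beta> (g r)))"
      by (rule indefinite_integral_continuous_1, rule integrable_continuous_real, rule Fc)
    have "continuous_on UNIV (\<lambda>t. integral {t0..cl t} (\<lambda>r. rhs \<alpha> 0 \<beta> (g r)))"
      by (rule continuous_on_compose2[OF c1 cl_cont]) (use cl_in in auto)
    hence c2: "continuous_on UNIV (H g)" unfolding H_def by (intro continuous_intros)
    have b: "norm (H g t - p) \<le> 1" for t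
    proof -
      have "norm (H g t - p) \<le> B * (cl t - t0)" unfolding H_def using intb[OF that, of "cl t"] cl_in[of t] by simp
      also have "\<dots> \<le> B * \<delta>" using cl_in[of t] B0 by (intro mult_left_mono) auto
      finally show ?thesis using dB by (simp add: mult.commute)
    qed
    thus "\<forall>t. norm (H g t - p) \<le> 1" by blast
    show "H g \<in> bcontfun"
    proof (rule bcontfun_normI[OF c2])
      fix t show "norm (H g t) \<le> norm p + 1" using b[of t] norm_triangle_sub[of "H g t" p] by linarith
    qed
  qed
  have \<Phi>app: "g \<in> S \<Longrightarrow> apply_bcontfun (\<Phi> g) = H g" for g
    unfolding \<Phi>_def using Hin by (simp add: Bcontfun_inverse)
  have "\<exists>!g\<in>S. \<Phi> g = g"
  proof (rule Banach_fix)
    show "complete S" unfolding S_def by (rule complete_eq_closed[THEN iffD2], rule closed_PiC) auto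
    have "const_bcontfun p \<in> S" unfolding inS by (simp add: const_bcontfun.rep_eq)
    thus "S \<noteq> {}" by blast
    show "0 \<le> \<delta> * L" using d0 L0 by simp
    show "\<delta> * L < 1" using dL by simp
    show "\<Phi> ` S \<subseteq> S"
    proof
      fix k assume "k \<in> \<Phi> ` S"
      then obtain g where "g \<in> S" "k = \<Phi> g" by blast
      hence "apply_bcontfun k = H g" using \<Phi>app by simp
      thus "k \<in> S" using Hin(2)[OF \<open>g \<in> S\<close>] inS[of k] by simp
    qed
    fix g h assume g: "g \<in> S" and h: "h \<in> S"
    show "dist (\<Phi> g) (\<Phi> h) \<le> \<delta> * L * dist g h"
    proof (rule dist_bound)
      fix t
      have "dist (\<Phi> g t) (\<Phi> h t) = norm (integral {t0..cl t} (\<lambda>r. rhs \<alpha> 0 \<beta> (g r)) - integral {t0..cl t} (\<lambda>r. rhs \<alpha> 0 \<beta> (h r)))"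
        using \<Phi>app[OF g] \<Phi>app[OF h] by (simp add: H_def dist_norm)
      also have "\<dots> = norm (integral {t0..cl t} (\<lambda>r. rhs \<alpha> 0 \<beta> (g r) - rhs \<alpha> 0 \<beta> (h r)))"
        by (subst integral_diff) (auto intro!: integrable_continuous_real Fc)
      also have "\<dots> \<le> (L * dist g h) * (cl t - t0)"
      proof (rule integral_bound)
        show "t0 \<le> cl t" using cl_in[of t] by simp
        show "continuous_on {t0..cl t} (\<lambda>r. rhs \<alpha> 0 \<beta> (g r) - rhs \<alpha> 0 \<beta> (h r))" by (intro continuous_intros Fc)
        fix r
        have "norm (rhs \<alpha> 0 \<beta> (g r) - rhs \<alpha> 0 \<beta> (h r)) \<le> L * norm (g r - h r)"
          unfolding L_def by (rule lip[OF assms(1,2) normR[OF g] normR[OF h]])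
        also have "\<dots> \<le> L * dist g h" using dist_bounded[of g r h] L0 by (simp add: dist_norm mult_left_mono)
        finally show "norm (rhs \<alpha> 0 \<beta> (g r) - rhs \<alpha> 0 \<beta> (h r)) \<le> L * dist g h" .
      qed
      also have "\<dots> \<le> (L * dist g h) * \<delta>" using cl_in[of t] L0 by (intro mult_left_mono) auto
      finally show "dist (\<Phi> g t) (\<Phi> h t) \<le> \<delta> * L * dist g h" by (simp add: algebra_simps)
    qed
  qed
  then obtain g where g: "g \<in> S" "\<Phi> g = g" by blast
  have fx: "g t = H g t" for t using \<Phi>app[OF g(1)] g(2) by metis
  show ?thesis unfolding dpd[symmetric]
  proof (intro exI[of _ "apply_bcontfun g"] conjI)
    show "continuous_on {t0..t0+\<delta>} g" by simp
    have "cl t0 = t0" using cl_id[of t0] d0 by simp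
    thus "g t0 = p" using fx[of t0] by (simp add: H_def)
    show "\<forall>t\<in>{t0..t0+\<delta>}. norm (g t - p) \<le> 1" using g(1) inS by blast
    show "\<forall>t\<in>{t0..t0+\<delta>}. g t = p + integral {t0..t} (\<lambda>r. rhs \<alpha> 0 \<beta> (g r))"
    proof
      fix t assume "t \<in> {t0..t0+\<delta>}"
      hence "cl t = t" using cl_id by blast
      thus "g t = p + integral {t0..t} (\<lambda>r. rhs \<alpha> 0 \<beta> (g r))" using fx[of t] unfolding H_def by metis
    qed
  qed
qed



lemma pic_deriv:
  fixes y :: "real \<Rightarrow> real \<times> real \<times> real" and t0 :: real
  assumes "continuous_on {t0..t0+\<delta>} y"
    "\<forall>t\<in>{t0..t0+\<delta>}. y t = p + integral {t0..t} (\<lambda>r. rhs \<alpha> 0 \<beta> (y r))"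
    "t \<in> {t0..t0+\<delta>}"
  shows "(y has_vector_derivative rhs \<alpha> 0 \<beta> (y t)) (at t within {t0..t0+\<delta>})"
proof -
  have "((\<lambda>u. integral {t0..u} (\<lambda>r. rhs \<alpha> 0 \<beta> (y r))) has_vector_derivative rhs \<alpha> 0 \<beta> (y t)) (at t within {t0..t0+\<delta>})"
    by (rule integral_has_vector_derivative[OF cont_rhs_comp[OF assms(1)] assms(3)])
  hence D2: "((\<lambda>u. p + integral {t0..u} (\<lambda>r. rhs \<alpha> 0 \<beta> (y r))) has_vector_derivative rhs \<alpha> 0 \<beta> (y t)) (at t within {t0..t0+\<delta>})"
    by (intro derivative_eq_intros) auto
  show ?thesis
  proof (rule has_vector_derivative_transform[OF assms(3) _ D2])
    fix x assume "x \<in> {t0..t0+\<delta>}"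
    thus "y x = p + integral {t0..x} (\<lambda>r. rhs \<alpha> 0 \<beta> (y r))" using assms(2) by blast
  qed
qed

lemma pic_deriv_open:
  fixes y :: "real \<Rightarrow> real \<times> real \<times> real" and t0 :: real
  assumes "continuous_on {t0..t0+\<delta>} y"
    "\<forall>t\<in>{t0..t0+\<delta>}. y t = p + integral {t0..t} (\<lambda>r. rhs \<alpha> 0 \<beta> (y r))"
    "t \<in> {t0<..<t0+\<delta>}"
  shows "(y has_vector_derivative rhs \<alpha> 0 \<beta> (y t)) (at t)"
proof -
  have "(y has_vector_derivative rhs \<alpha> 0 \<beta> (y t)) (at t within {t0..t0+\<delta>})"
    by (rule pic_deriv[OF assms(1,2)]) (use assms(3) in auto)
  hence "(y has_vector_derivative rhs \<alpha> 0 \<beta> (y t)) (at t within {t0<..<t0+\<delta>})"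
    by (rule has_vector_derivative_within_subset) auto
  thus ?thesis by (subst (asm) has_vector_derivative_within_open[OF assms(3)]) auto
qed

lemma nsq_deriv:
  fixes \<phi> :: "real \<Rightarrow> 'a::real_inner"
  assumes "(\<phi> has_vector_derivative v) (at r within S)"
  shows "((\<lambda>r. (norm (\<phi> r))^2) has_real_derivative 2 * inner (\<phi> r) v) (at r within S)"
proof -
  have "((\<lambda>r. inner (\<phi> r) (\<phi> r)) has_derivative (\<lambda>h. inner (\<phi> r) (h *\<^sub>R v) + inner (h *\<^sub>R v) (\<phi> r))) (at r within S)"
    using assms unfolding has_vector_derivative_def by (intro has_derivative_inner)
  moreover have "(\<lambda>h. inner (\<phi> r) (h *\<^sub>R v) + inner (h *\<^sub>R v) (\<phi> r)) = (\<lambda>h. (2 * inner (\<phi> r) v) * h)"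
    by (auto simp: inner_commute algebra_simps)
  ultimately show ?thesis unfolding has_field_derivative_def power2_norm_eq_inner by simp
qed

lemma inner_bound:
  fixes p :: "real \<times> real \<times> real"
  assumes "\<alpha> \<ge> 0" "\<beta> \<ge> 0"
  shows "2 * inner p (rhs \<alpha> 0 \<beta> p) \<le> 2 * (6 + \<alpha> + 2*\<beta>) * (1 + (norm p)^2)^2"
proof -
  define r where "r = norm p"
  have r0: "r \<ge> 0" unfolding r_def by simp
  have "inner p (rhs \<alpha> 0 \<beta> p) \<le> norm p * norm (rhs \<alpha> 0 \<beta> p)" by (rule norm_cauchy_schwarz)
  also have "\<dots> \<le> r * (Lc \<alpha> \<beta> r * r)" unfolding r_def by (intro mult_left_mono bnd assms) auto
  also have "\<dots> = r^2 * Lc \<alpha> \<beta> r" by (simp add: power2_eq_square)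
  also have "\<dots> \<le> (1 + r^2) * ((6 + \<alpha> + 2*\<beta>) * (1 + r^2))"
  proof (rule mult_mono)
    have "0 \<le> (r - 1/2)^2" by simp
    hence rr: "r \<le> 1 + r^2" by (simp add: power2_eq_square algebra_simps)
    have "(2 + 2*\<beta>) * r \<le> (2 + 2*\<beta>) * (1 + r^2)" using rr assms by (intro mult_left_mono) auto
    thus "Lc \<alpha> \<beta> r \<le> (6 + \<alpha> + 2*\<beta>) * (1 + r^2)" unfolding Lc_def using assms
      by (simp add: algebra_simps) (smt (verit) zero_le_power2 mult_nonneg_nonneg)
    show "0 \<le> Lc \<alpha> \<beta> r" using Lc_nonneg assms r0 by blast
  qed auto
  finally show ?thesis unfolding r_def by (simp add: power2_eq_square algebra_simps)
qed

lemma apb: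
  fixes \<phi> :: "real \<Rightarrow> real \<times> real \<times> real"
  assumes "\<alpha> \<ge> 0" "\<beta> \<ge> 0"
    and der: "\<And>r. r \<in> {s..t} \<Longrightarrow> (\<phi> has_vector_derivative rhs \<alpha> 0 \<beta> (\<phi> r)) (at r)"
    and st: "s \<le> t" and N0: "1 + (norm (\<phi> s))^2 \<le> N0" and tt: "t - s \<le> 1 / (4 * (6 + \<alpha> + 2*\<beta>) * N0)"
  shows "1 + (norm (\<phi> t))^2 \<le> 2 * N0"
proof -
  define K where "K = 6 + \<alpha> + 2*\<beta>"
  have K0: "K > 0" unfolding K_def using assms by simp
  define N where "N = (\<lambda>r. 1 + (norm (\<phi> r))^2)"
  have Npos: "N r \<ge> 1" for r unfolding N_def by simp
  have "0 \<le> (norm (\<phi> s))^2" by simp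
  hence N01: "N0 \<ge> 1" using N0 by linarith
  define h where "h = (\<lambda>r. inverse (N r) + 2 * K * r)"
  have "h s \<le> h t"
  proof (rule DERIV_nonneg_imp_nondecreasing[OF st])
    fix x assume x: "s \<le> x" "x \<le> t"
    have dN: "(N has_real_derivative 2 * inner (\<phi> x) (rhs \<alpha> 0 \<beta> (\<phi> x))) (at x)"
    proof -
      have "((\<lambda>r. 1 + (norm (\<phi> r))^2) has_real_derivative 0 + 2 * inner (\<phi> x) (rhs \<alpha> 0 \<beta> (\<phi> x))) (at x)"
        by (intro DERIV_add DERIV_const nsq_deriv der) (use x in auto)
      thus ?thesis unfolding N_def by simp
    qed
    have dh: "(h has_real_derivative (- (2 * inner (\<phi> x) (rhs \<alpha> 0 \<beta> (\<phi> x)) * inverse (N x ^ Suc (Suc 0)))) + 2 * K) (at x)"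
      unfolding h_def
      by (intro DERIV_add DERIV_inverse_fun dN) (use Npos[of x] in \<open>auto intro!: derivative_eq_intros\<close>)
    have "2 * inner (\<phi> x) (rhs \<alpha> 0 \<beta> (\<phi> x)) \<le> 2 * K * (N x)^2"
      unfolding K_def N_def using inner_bound[OF assms(1,2)] by blast
    hence "2 * inner (\<phi> x) (rhs \<alpha> 0 \<beta> (\<phi> x)) * inverse (N x ^ Suc (Suc 0)) \<le> 2 * K"
      using Npos[of x] by (simp add: field_simps power2_eq_square)
    thus "\<exists>y. (h has_real_derivative y) (at x) \<and> 0 \<le> y" using dh by auto
  qed
  hence "inverse (N s) - 2 * K * (t - s) \<le> inverse (N t)" unfolding h_def by (simp add: algebra_simps)
  moreover have "2 * K * (t - s) \<le> inverse N0 / 2"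
  proof -
    have "2 * K * (t - s) \<le> 2 * K * (1 / (4 * K * N0))" using tt K0 unfolding K_def by (intro mult_left_mono) auto
    thus ?thesis using K0 N01 by (simp add: field_simps)
  qed
  moreover have "inverse N0 \<le> inverse (N s)"
  proof (rule le_imp_inverse_le)
    show "N s \<le> N0" using N0 unfolding N_def .
    show "0 < N s" using Npos[of s] by linarith
  qed
  ultimately have "inverse N0 / 2 \<le> inverse (N t)" by linarith
  hence "inverse (2 * N0) \<le> inverse (N t)" by simp
  moreover have "0 < N t" using Npos[of t] by linarith
  moreover have "0 < 2 * N0" using N01 by linarith
  ultimately have "N t \<le> 2 * N0" using inverse_le_iff_le by blast
  thus ?thesis unfolding N_def .
qed

lemma gronwall:
  fixes y1 y2 :: "real \<Rightarrow> real \<times> real \<times> real"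
  assumes "\<alpha> \<ge> 0" "\<beta> \<ge> 0" "a \<le> t"
    and c1: "continuous_on {a..t} y1" and c2: "continuous_on {a..t} y2"
    and d1: "\<And>r. r \<in> {a<..<t} \<Longrightarrow> (y1 has_vector_derivative rhs \<alpha> 0 \<beta> (y1 r)) (at r)"
    and d2: "\<And>r. r \<in> {a<..<t} \<Longrightarrow> (y2 has_vector_derivative rhs \<alpha> 0 \<beta> (y2 r)) (at r)"
    and b1: "\<And>r. r \<in> {a..t} \<Longrightarrow> norm (y1 r) \<le> R"
    and b2: "\<And>r. r \<in> {a..t} \<Longrightarrow> norm (y2 r) \<le> R"
  shows "(norm (y1 t - y2 t))^2 \<le> (norm (y1 a - y2 a))^2 * exp (2 * Lc \<alpha> \<beta> R * (t - a))"
proof -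
  define L where "L = Lc \<alpha> \<beta> R"
  define w where "w = (\<lambda>r. (norm (y1 r - y2 r))^2 * exp (- (2 * L) * (r - a)))"
  have "w t \<le> w a"
  proof (rule DERIV_nonpos_imp_decreasing_open[OF assms(3)])
    show "continuous_on {a..t} w" unfolding w_def by (intro continuous_intros c1 c2)
    fix x assume x: "a < x" "x < t"
    let ?d = "rhs \<alpha> 0 \<beta> (y1 x) - rhs \<alpha> 0 \<beta> (y2 x)"
    have dd: "((\<lambda>r. y1 r - y2 r) has_vector_derivative ?d) (at x)"
      by (intro has_vector_derivative_diff d1 d2) (use x in auto)
    have dexp: "((\<lambda>r. exp (- (2 * L) * (r - a))) has_real_derivative exp (- (2 * L) * (x - a)) * (- (2 * L))) (at x)"
      by (auto intro!: derivative_eq_intros)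
    have dw: "(w has_real_derivative (2 * inner (y1 x - y2 x) ?d) * exp (- (2 * L) * (x - a))
        + exp (- (2 * L) * (x - a)) * (- (2 * L)) * (norm (y1 x - y2 x))^2) (at x)"
      unfolding w_def
      by (rule DERIV_mult[OF nsq_deriv[OF dd] dexp])
    have "inner (y1 x - y2 x) ?d \<le> norm (y1 x - y2 x) * norm ?d" by (rule norm_cauchy_schwarz)
    also have "\<dots> \<le> norm (y1 x - y2 x) * (L * norm (y1 x - y2 x))"
      unfolding L_def by (intro mult_left_mono lip assms(1,2) b1 b2) (use x in auto)
    finally have "inner (y1 x - y2 x) ?d \<le> L * (norm (y1 x - y2 x))^2" by (simp add: power2_eq_square algebra_simps)
    hence "(2 * inner (y1 x - y2 x) ?d) * exp (- (2 * L) * (x - a))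
        + exp (- (2 * L) * (x - a)) * (- (2 * L)) * (norm (y1 x - y2 x))^2 \<le> 0"
    proof -
      assume h: "inner (y1 x - y2 x) ?d \<le> L * (norm (y1 x - y2 x))^2"
      define I where "I = inner (y1 x - y2 x) ?d"
      define E where "E = exp (- (2 * L) * (x - a))"
      define n where "n = (norm (y1 x - y2 x))^2"
      have "2 * I * E + E * (- (2 * L)) * n = 2 * E * (I - L * n)" by (simp add: algebra_simps)
      also have "\<dots> \<le> 0" using h unfolding I_def n_def E_def by (intro mult_nonneg_nonpos) auto
      finally show ?thesis unfolding I_def E_def n_def .
    qed
    thus "\<exists>y. (w has_real_derivative y) (at x) \<and> y \<le> 0" using dw by blast
  qed
  hence "(norm (y1 t - y2 t))^2 * exp (- (2 * L) * (t - a)) \<le> (norm (y1 a - y2 a))^2" unfolding w_def by simp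
  hence A: "(norm (y1 t - y2 t))^2 * exp (- (2 * L) * (t - a)) * exp (2 * L * (t - a)) \<le> (norm (y1 a - y2 a))^2 * exp (2 * L * (t - a))"
    by (intro mult_right_mono) auto
  have B: "(norm (y1 t - y2 t))^2 * exp (- (2 * L) * (t - a)) * exp (2 * L * (t - a)) = (norm (y1 t - y2 t))^2"
    by (simp add: mult.assoc exp_add[symmetric])
  have "(norm (y1 t - y2 t))^2 \<le> (norm (y1 a - y2 a))^2 * exp (2 * L * (t - a))" using A B by linarith
  thus ?thesis unfolding L_def .
qed

lemma zd:
  fixes g :: "real \<Rightarrow> real"
  assumes "open U" "s \<in> U" "\<And>t. t \<in> U \<Longrightarrow> g t = c" "(g has_real_derivative d) (at s)"
  shows "d = 0"
proof -
  have "(g has_real_derivative 0) (at s)"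
    by (rule has_field_derivative_transform_within_open[OF DERIV_const assms(1,2)]) (use assms(3) in auto)
  thus ?thesis using DERIV_unique assms(4) by blast
qed

lemma eqlem:
  fixes \<phi> :: "real \<Rightarrow> real \<times> real \<times> real"
  assumes "open U" "s \<in> U" "\<beta> > 0"
    and der: "\<And>t. t \<in> U \<Longrightarrow> (\<phi> has_vector_derivative rhs \<alpha> 0 \<beta> (\<phi> t)) (at t)"
    and u0: "\<And>t. t \<in> U \<Longrightarrow> snd (snd (\<phi> t)) = 0"
  shows "fst (snd (\<phi> s)) = 0 \<and> (fst (\<phi> s) = 0 \<or> fst (\<phi> s) = 1 \<or> fst (\<phi> s) = -1)"
proof -
  define x where "x = (\<lambda>t. fst (\<phi> t))"
  define th where "th = (\<lambda>t. fst (snd (\<phi> t)))"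
  have P1: "x t * th t = 0" if t: "t \<in> U" for t
  proof -
    have "- \<alpha> * snd (snd (\<phi> t)) - \<beta> * fst (\<phi> t) * fst (snd (\<phi> t)) = 0"
      by (rule zd[OF assms(1) t u0 comp_deriv(3)[OF der[OF t]]])
    thus ?thesis using u0[OF t] assms(3) unfolding x_def th_def by simp
  qed
  have cphi: "continuous_on U \<phi>"
    by (rule continuous_at_imp_continuous_on) (use der has_vector_derivative_continuous in blast)
  have cx: "continuous_on U x" unfolding x_def by (intro continuous_intros cphi)
  have cth: "continuous_on U th" unfolding th_def by (intro continuous_intros cphi)
  show ?thesis
  proof (cases "x s = 0")
    case False
    define V where "V = U \<inter> x -` (- {0})"
    have V: "open V" "s \<in> V" unfolding V_def using continuous_open_preimage[OF cx assms(1), of "- {0}"] False assms(2) by auto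
    have th0: "th t = 0" if "t \<in> V" for t using P1[of t] that unfolding V_def by auto
    have "- fst (\<phi> s) * snd (snd (\<phi> s)) + fst (\<phi> s) - fst (\<phi> s)^3 = 0"
      by (rule zd[OF V _ comp_deriv(2)[OF der[OF assms(2)]]]) (use th0 th_def in auto)
    hence "x s * (1 - x s) * (1 + x s) = 0" using u0[OF assms(2)] unfolding x_def
      by (simp add: algebra_simps power3_eq_cube)
    hence "x s = 1 \<or> x s = -1" using False by auto
    moreover have "th s = 0" using th0 V by blast
    ultimately show ?thesis unfolding x_def th_def by auto
  next
    case True
    have "th s = 0"
    proof (rule ccontr)
      assume ne: "th s \<noteq> 0"
      define V where "V = U \<inter> th -` (- {0})"
      have V: "open V" "s \<in> V" unfolding V_def using continuous_open_preimage[OF cth assms(1), of "- {0}"] ne assms(2) by auto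
      have x0: "x t = 0" if "t \<in> V" for t using P1[of t] that unfolding V_def by auto
      have "fst (snd (\<phi> s)) = 0"
        by (rule zd[OF V _ comp_deriv(1)[OF der[OF assms(2)]]]) (use x0 x_def in auto)
      thus False using ne unfolding th_def by simp
    qed
    thus ?thesis using True unfolding x_def th_def by auto
  qed
qed

lemma En_eq:
  assumes "fst (snd p) = 0" "snd (snd p) = 0" "fst p = 0 \<or> fst p = 1 \<or> fst p = -1"
  shows "En \<beta> p \<le> 0"
  using assms by (cases p) (auto simp: En_def)



lemma shift_deriv:
  assumes "(\<phi> has_vector_derivative v) (at (c + r))"
  shows "((\<lambda>r. \<phi> (c + r)) has_vector_derivative v) (at r)"
proof -
  have "((\<lambda>r. c + r) has_vector_derivative 1) (at r)"
    using has_real_derivative_iff_has_vector_derivative[THEN iffD1, OF DERIV_add[OF DERIV_const DERIV_ident]] by simp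
  from vector_diff_chain_at[OF this, of \<phi> v] assms show ?thesis by (simp add: o_def)
qed

lemma En_alt: "En \<beta> p = (fst (snd p))^2/2 - (fst p)^2/2 + (fst p)^4/4 - (snd (snd p))^2/(2*\<beta>)"
  by (cases p) (simp add: En_def)

lemma En_cont: "\<beta> > 0 \<Longrightarrow> isCont (En \<beta>) x"
proof -
  assume "\<beta> > 0"
  hence "continuous_on UNIV (En \<beta>)" unfolding En_alt[abs_def] by (auto intro!: continuous_intros)
  thus ?thesis using continuous_on_eq_continuous_at[of UNIV "En \<beta>"] by blast
qed

lemma En_eq_pm1:
  assumes "fst (snd p) = 0" "snd (snd p) = 0" "fst p = 1 \<or> fst p = -1"
  shows "En \<beta> p = - 1/4"
  using assms by (cases p) (auto simp: En_def)



lemma apb_R: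
  fixes \<phi> :: "real \<Rightarrow> real \<times> real \<times> real"
  assumes "\<alpha> \<ge> 0" "\<beta> \<ge> 0"
    and der: "\<And>r. r \<in> {s..t} \<Longrightarrow> (\<phi> has_vector_derivative rhs \<alpha> 0 \<beta> (\<phi> r)) (at r)"
    and st: "s \<le> t" and M: "norm (\<phi> s) \<le> M" and tt: "t - s \<le> 1 / (4 * (6 + \<alpha> + 2*\<beta>) * (1 + M^2))"
  shows "norm (\<phi> t) \<le> 2 * M + 2"
proof -
  have M0: "M \<ge> 0" using M norm_ge_zero order_trans by blast
  have "(norm (\<phi> s))^2 \<le> M^2" using M by (intro power_mono) auto
  hence "1 + (norm (\<phi> s))^2 \<le> 1 + M^2" by simp
  from apb[OF assms(1,2) der st this tt] have "1 + (norm (\<phi> t))^2 \<le> 2 * (1 + M^2)" by blast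
  moreover have "(2 * M + 2)^2 = 4 * M^2 + 8 * M + 4" by (simp add: power2_eq_square algebra_simps)
  moreover have "0 \<le> M^2" by simp
  moreover have "2 * (1 + M^2) = 2 + 2 * M^2" by simp
  ultimately have "(norm (\<phi> t))^2 \<le> (2 * M + 2)^2" using M0 by linarith
  thus ?thesis by (rule power2_le_imp_le) (use M0 in simp)
qed

lemma finite_case:
  fixes \<phi> :: "real \<Rightarrow> real \<times> real \<times> real" and bb :: real
  assumes a: "\<alpha> > 0" "\<beta> > 0"
    and der: "\<And>t. t < bb \<Longrightarrow> (\<phi> has_vector_derivative rhs \<alpha> 0 \<beta> (\<phi> t)) (at t)"
    and maximal: "\<forall>c \<psi>. c > ereal bb \<longrightarrow> solves_on \<alpha> 0 \<beta> \<psi> {t. ereal t < c}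
                     \<longrightarrow> \<not> (\<forall>t. ereal t < ereal bb \<longrightarrow> \<psi> t = \<phi> t)"
  shows "filterlim (\<lambda>t. norm (\<phi> t)) at_top (at_left bb)"
proof (rule ccontr)
  have a0: "\<alpha> \<ge> 0" "\<beta> \<ge> 0" using a by auto
  assume "\<not> filterlim (\<lambda>t. norm (\<phi> t)) at_top (at_left bb)"
  then obtain Z where nZ: "\<not> eventually (\<lambda>t. Z \<le> norm (\<phi> t)) (at_left bb)" unfolding filterlim_at_top by blast
  define M where "M = max Z 0"
  have M0: "M \<ge> 0" unfolding M_def by simp
  define \<tau> where "\<tau> = 1 / (4 * (6 + \<alpha> + 2*\<beta>) * (1 + M^2))"
  have \<tau>0: "\<tau> > 0" unfolding \<tau>_def using a by (simp add: add_pos_nonneg)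
  from nZ have nZ': "\<not> (\<exists>b<bb. \<forall>y>b. y < bb \<longrightarrow> Z \<le> norm (\<phi> y))" unfolding eventually_at_left_field .
  have "bb - \<tau> < bb" using \<tau>0 by simp
  hence "\<not> (\<forall>y>bb - \<tau>. y < bb \<longrightarrow> Z \<le> norm (\<phi> y))" using nZ' by blast
  then obtain s where s: "bb - \<tau> < s" "s < bb" "norm (\<phi> s) < Z" by auto
  have sM: "norm (\<phi> s) \<le> M" using s(3) unfolding M_def by simp
  define R where "R = 2 * M + 2"
  have R0: "R \<ge> 0" unfolding R_def using M0 by simp
  have bnd\<phi>: "norm (\<phi> t) \<le> R" if "s \<le> t" "t < bb" for t
    unfolding R_def
    by (rule apb_R[where s=s and M=M, OF a0]) (use der that s sM in \<open>auto simp: \<tau>_def\<close>)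
  define \<delta> where "\<delta> = pd \<alpha> \<beta> R"
  have \<delta>0: "\<delta> > 0" unfolding \<delta>_def using pd_pos a0 R0 by blast
  define t1 where "t1 = max s (bb - \<delta>/2)"
  have t1: "s \<le> t1" "t1 < bb" "bb \<le> t1 + \<delta>/2" unfolding t1_def using s \<delta>0 by auto
  have nt1: "norm (\<phi> t1) \<le> R" using bnd\<phi> t1 by auto
  obtain y where y: "continuous_on {t1..t1+\<delta>} y" "y t1 = \<phi> t1"
    "\<forall>t\<in>{t1..t1+\<delta>}. norm (y t - \<phi> t1) \<le> 1"
    "\<forall>t\<in>{t1..t1+\<delta>}. y t = \<phi> t1 + integral {t1..t} (\<lambda>r. rhs \<alpha> 0 \<beta> (y r))"
    using picard[OF a0 nt1, of t1] unfolding \<delta>_def by blast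
  have ybnd: "norm (y t) \<le> R + 1" if "t \<in> {t1..t1+\<delta>}" for t
    using y(3) that nt1 norm_triangle_sub[of "y t" "\<phi> t1"] by fastforce
  have yder: "(y has_vector_derivative rhs \<alpha> 0 \<beta> (y t)) (at t)" if "t \<in> {t1<..<t1+\<delta>}" for t
    by (rule pic_deriv_open[OF y(1) y(4) that])
  have eqy: "\<phi> t = y t" if "t1 \<le> t" "t < bb" for t
  proof -
    have cphi: "continuous_on {t1..t} \<phi>"
    proof (rule continuous_at_imp_continuous_on, intro ballI)
      fix x assume "x \<in> {t1..t}"
      hence "x < bb" using that by auto
      thus "isCont \<phi> x" using der has_vector_derivative_continuous by blast
    qed
    have cy: "continuous_on {t1..t} y" by (rule continuous_on_subset[OF y(1)]) (use that t1 in auto)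
    have "(norm (\<phi> t - y t))^2 \<le> (norm (\<phi> t1 - y t1))^2 * exp (2 * Lc \<alpha> \<beta> (R+1) * (t - t1))"
    proof (rule gronwall[OF a0 that(1) cphi cy])
      fix r assume r: "r \<in> {t1<..<t}"
      show "(\<phi> has_vector_derivative rhs \<alpha> 0 \<beta> (\<phi> r)) (at r)" using der r that by auto
      show "(y has_vector_derivative rhs \<alpha> 0 \<beta> (y r)) (at r)" using yder r that t1 by auto
    next
      fix r assume r: "r \<in> {t1..t}"
      show "norm (\<phi> r) \<le> R + 1" using bnd\<phi>[of r] r that t1 by auto
      show "norm (y r) \<le> R + 1" using ybnd[of r] r that t1 by auto
    qed
    hence "(norm (\<phi> t - y t))^2 \<le> 0" using y(2) by simp
    thus ?thesis by simp
  qed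
  define \<psi> where "\<psi> = (\<lambda>t. if t < bb then \<phi> t else y t)"
  have "solves_on \<alpha> 0 \<beta> \<psi> {t. ereal t < ereal (t1 + \<delta>)}"
    unfolding solves_on_def
  proof
    fix t assume "t \<in> {t. ereal t < ereal (t1 + \<delta>)}"
    hence tlt: "t < t1 + \<delta>" by simp
    show "(\<psi> has_vector_derivative rhs \<alpha> 0 \<beta> (\<psi> t)) (at t)"
    proof (cases "t < bb")
      case True
      have "(\<psi> has_vector_derivative rhs \<alpha> 0 \<beta> (\<phi> t)) (at t)"
        by (rule has_vector_derivative_transform_within_open[OF der[OF True] open_lessThan[of bb]])
          (use True in \<open>auto simp: \<psi>_def\<close>)
      thus ?thesis using True by (simp add: \<psi>_def)
    next
      case False
      have tin: "t \<in> {t1<..<t1+\<delta>}" using False t1 tlt by auto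
      have "(\<psi> has_vector_derivative rhs \<alpha> 0 \<beta> (y t)) (at t)"
      proof (rule has_vector_derivative_transform_within_open[OF yder[OF tin] open_greaterThanLessThan tin])
        fix r assume r: "r \<in> {t1<..<t1+\<delta>}"
        show "y r = \<psi> r"
        proof (cases "r < bb")
          case True thus ?thesis using eqy[of r] r by (simp add: \<psi>_def)
        qed (simp add: \<psi>_def)
      qed
      thus ?thesis using False by (simp add: \<psi>_def)
    qed
  qed
  moreover have "ereal (t1 + \<delta>) > ereal bb" using t1 \<delta>0 by simp
  moreover have "\<forall>t. ereal t < ereal bb \<longrightarrow> \<psi> t = \<phi> t" by (simp add: \<psi>_def)
  ultimately show False using maximal by blast
qed



lemma infinite_case:
  fixes \<phi> :: "real \<Rightarrow> real \<times> real \<times> real"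
  assumes a: "\<alpha> > 0" "\<beta> > 0"
    and der: "\<And>t. (\<phi> has_vector_derivative rhs \<alpha> 0 \<beta> (\<phi> t)) (at t)"
    and nontrivial: "\<exists>t. \<phi> t \<noteq> 0"
    and lim_x: "((\<lambda>t. fst (\<phi> t)) \<longlongrightarrow> 0) at_bot"
    and lim_theta: "((\<lambda>t. fst (snd (\<phi> t))) \<longlongrightarrow> 0) at_bot"
    and lim_u: "((\<lambda>t. snd (snd (\<phi> t))) \<longlongrightarrow> 0) at_bot"
  shows "filterlim (\<lambda>t. norm (\<phi> t)) at_top at_top"
proof -
  have a0: "\<alpha> \<ge> 0" "\<beta> \<ge> 0" using a by auto
  define Ef where "Ef = (\<lambda>t. En \<beta> (\<phi> t))"
  have dE: "(Ef has_real_derivative \<alpha> / \<beta> * (snd (snd (\<phi> t)))^2) (at t)" for t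
    unfolding Ef_def by (rule En_deriv[OF der a(2)])
  have Emono: "Ef s \<le> Ef t" if "s \<le> t" for s t
  proof (rule DERIV_nonneg_imp_nondecreasing[OF that])
    fix x show "\<exists>y. (Ef has_real_derivative y) (at x) \<and> 0 \<le> y"
      using dE[of x] a by (intro exI[of _ "\<alpha> / \<beta> * (snd (snd (\<phi> x)))^2"]) simp
  qed
  have Ebot: "(Ef \<longlongrightarrow> 0) at_bot"
  proof -
    have "((\<lambda>t. (fst (snd (\<phi> t)))^2/2 - (fst (\<phi> t))^2/2 + (fst (\<phi> t))^4/4 - (snd (snd (\<phi> t)))^2/(2*\<beta>))
       \<longlongrightarrow> 0^2/2 - 0^2/2 + 0^4/4 - 0^2/(2*\<beta>)) at_bot"
      by (intro tendsto_intros lim_x lim_theta lim_u) (use a in auto)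
    thus ?thesis unfolding Ef_def En_alt[abs_def] by simp
  qed
  have Enn: "0 \<le> Ef t" for t
  proof (rule tendsto_upperbound[OF Ebot])
    show "eventually (\<lambda>s. Ef s \<le> Ef t) at_bot" unfolding eventually_at_bot_linorder using Emono by blast
  qed simp
  obtain t1 where t1: "Ef t1 > 0"
  proof (rule ccontr)
    assume "\<not> thesis"
    hence E0: "Ef t = 0" for t
    proof -
      have "\<not> Ef t > 0" using that \<open>\<not> thesis\<close> by blast
      thus ?thesis using Enn[of t] by linarith
    qed
    have u0: "snd (snd (\<phi> t)) = 0" for t
    proof -
      have "\<alpha> / \<beta> * (snd (snd (\<phi> t)))^2 = 0" by (rule zd[OF open_UNIV UNIV_I _ dE]) (use E0 in auto)
      thus ?thesis using a by simp
    qed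
    have "\<phi> t = 0" for t
    proof -
      have e: "fst (snd (\<phi> t)) = 0 \<and> (fst (\<phi> t) = 0 \<or> fst (\<phi> t) = 1 \<or> fst (\<phi> t) = -1)"
        by (rule eqlem[OF open_UNIV UNIV_I a(2) der u0])
      have "fst (\<phi> t) = 0"
      proof (rule ccontr)
        assume "fst (\<phi> t) \<noteq> 0"
        hence "fst (\<phi> t) = 1 \<or> fst (\<phi> t) = -1" using e by blast
        hence "En \<beta> (\<phi> t) = -1/4" using e u0[of t] by (intro En_eq_pm1) auto
        thus False using E0[of t] unfolding Ef_def by simp
      qed
      thus ?thesis using e u0[of t] by (simp add: prod_eq_iff)
    qed
    thus False using nontrivial by blast
  qed
  show ?thesis
  proof (rule ccontr)
    assume "\<not> filterlim (\<lambda>t. norm (\<phi> t)) at_top at_top"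
    then obtain Z where nZ: "\<not> eventually (\<lambda>t. Z \<le> norm (\<phi> t)) at_top" unfolding filterlim_at_top by blast
    hence "\<forall>N. \<exists>t\<ge>N. norm (\<phi> t) < Z" unfolding eventually_at_top_linorder by (auto simp: not_le)
    hence "\<forall>n::nat. \<exists>t. real n \<le> t \<and> norm (\<phi> t) < Z" by blast
    then obtain T where T0: "\<forall>n::nat. real n \<le> T n \<and> norm (\<phi> (T n)) < Z" unfolding choice_iff by blast
    hence T: "\<And>n::nat. T n \<ge> real n" "\<And>n::nat. norm (\<phi> (T n)) < Z" by auto
    define M where "M = max Z 0"
    have M0: "M \<ge> 0" unfolding M_def by simp
    have "seq_compact (cball (0::real \<times> real \<times> real) M)" by (rule compact_imp_seq_compact) simp
    moreover have "\<forall>n. \<phi> (T n) \<in> cball 0 M"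
    proof
      fix n
      have "norm (\<phi> (T n)) < Z" by (rule T(2))
      thus "\<phi> (T n) \<in> cball 0 M" unfolding M_def by simp
    qed
    ultimately obtain q r where q: "q \<in> cball 0 M" "strict_mono r" "((\<lambda>n. \<phi> (T n)) \<circ> r) \<longlonglongrightarrow> q"
      by (rule seq_compactE)
    define tn where "tn = (\<lambda>n. T (r n))"
    have tn_ge: "tn n \<ge> real n" for n using T(1)[of "r n"] seq_suble[OF q(2), of n] unfolding tn_def by linarith
    have tnM: "norm (\<phi> (tn n)) \<le> M" for n using T(2)[of "r n"] unfolding tn_def M_def by simp
    have tnq: "(\<lambda>n. \<phi> (tn n)) \<longlonglongrightarrow> q" using q(3) unfolding tn_def o_def .
    have nq: "norm q \<le> M" using q(1) by simp
    have tn_lim: "filterlim tn at_top sequentially"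
      by (rule filterlim_at_top_mono[OF filterlim_real_sequentially]) (use tn_ge in auto)
    define Eq where "Eq = En \<beta> q"
    have Etn: "(\<lambda>n. Ef (tn n)) \<longlonglongrightarrow> Eq" unfolding Ef_def Eq_def by (rule isCont_tendsto_compose[OF En_cont[OF a(2)] tnq])
    have Ele: "Ef t \<le> Eq" for t
    proof (rule tendsto_lowerbound[OF Etn])
      have "eventually (\<lambda>n. t \<le> tn n) sequentially" using tn_lim unfolding filterlim_at_top by blast
      thus "eventually (\<lambda>n. Ef t \<le> Ef (tn n)) sequentially" by eventually_elim (rule Emono)
    qed simp
    have Eqpos: "Eq > 0" using Ele[of t1] t1 by simp
    define \<tau> where "\<tau> = 1 / (4 * (6 + \<alpha> + 2*\<beta>) * (1 + M^2))"
    have \<tau>0: "\<tau> > 0" unfolding \<tau>_def using a by (simp add: add_pos_nonneg)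
    define R where "R = 2 * M + 2"
    have R0: "R \<ge> 0" unfolding R_def using M0 by simp
    have phb: "norm (\<phi> (tn n + s)) \<le> R" if "0 \<le> s" "s \<le> \<tau>" for n s
      unfolding R_def
      by (rule apb_R[where s="tn n" and M=M, OF a0]) (use der that tnM in \<open>auto simp: \<tau>_def\<close>)
    define \<delta> where "\<delta> = pd \<alpha> \<beta> R"
    have \<delta>0: "\<delta> > 0" unfolding \<delta>_def using pd_pos a0 R0 by blast
    have nqR: "norm q \<le> R" using nq unfolding R_def using M0 by simp
    have "\<exists>z. continuous_on {0..\<delta>} z \<and> z 0 = q \<and>
      (\<forall>t\<in>{0..\<delta>}. norm (z t - q) \<le> 1) \<and>
      (\<forall>t\<in>{0..\<delta>}. z t = q + integral {0..t} (\<lambda>r. rhs \<alpha> 0 \<beta> (z r)))"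
      using picard[OF a0 nqR, of 0] unfolding \<delta>_def by (simp only: add_0_left)
    then obtain z where z: "continuous_on {0..\<delta>} z" "z 0 = q"
      "\<forall>t\<in>{0..\<delta>}. norm (z t - q) \<le> 1"
      "\<forall>t\<in>{0..\<delta>}. z t = q + integral {0..t} (\<lambda>r. rhs \<alpha> 0 \<beta> (z r))"
      by blast
    have zbnd: "norm (z t) \<le> R" if "t \<in> {0..\<delta>}" for t
    proof -
      have "norm (z t - q) \<le> 1" using z(3) that by blast
      moreover have "norm (z t) \<le> norm q + norm (z t - q)" by (rule norm_triangle_sub)
      ultimately show ?thesis using nq M0 unfolding R_def by linarith
    qed
    have zder: "(z has_vector_derivative rhs \<alpha> 0 \<beta> (z t)) (at t)" if "t \<in> {0<..<\<delta>}" for t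
    proof -
      have z1: "continuous_on {0..0+\<delta>} z" using z(1) by simp
      have z4: "\<forall>t\<in>{0..0+\<delta>}. z t = q + integral {0..t} (\<lambda>r. rhs \<alpha> 0 \<beta> (z r))" using z(4) by (simp only: add_0_left)
      show ?thesis by (rule pic_deriv_open[OF z1 z4]) (use that in simp)
    qed
    define \<delta>' where "\<delta>' = min \<delta> \<tau>"
    have \<delta>'0: "\<delta>' > 0" unfolding \<delta>'_def using \<delta>0 \<tau>0 by simp
    have Ez: "En \<beta> (z s) = Eq" if s: "s \<in> {0..\<delta>'}" for s
    proof -
      define L where "L = Lc \<alpha> \<beta> R"
      have sh: "((\<lambda>r. \<phi> (tn n + r)) has_vector_derivative rhs \<alpha> 0 \<beta> (\<phi> (tn n + r))) (at r)" for n r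
        by (rule shift_deriv[OF der])
      have gw: "(norm (\<phi> (tn n + s) - z s))^2 \<le> (norm (\<phi> (tn n) - q))^2 * exp (2 * L * s)" for n
      proof -
        have "(norm (\<phi> (tn n + s) - z s))^2 \<le> (norm (\<phi> (tn n + 0) - z 0))^2 * exp (2 * L * (s - 0))"
          unfolding L_def
        proof (rule gronwall[OF a0])
          show "0 \<le> s" using s by simp
          show "continuous_on {0..s} (\<lambda>r. \<phi> (tn n + r))"
          proof (rule continuous_at_imp_continuous_on, intro ballI)
            fix x show "isCont (\<lambda>r. \<phi> (tn n + r)) x" by (rule has_vector_derivative_continuous[OF sh])
          qed
          show "continuous_on {0..s} z" by (rule continuous_on_subset[OF z(1)]) (use s in \<open>auto simp: \<delta>'_def\<close>)
          fix r assume r: "r \<in> {0<..<s}"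
          show "((\<lambda>r. \<phi> (tn n + r)) has_vector_derivative rhs \<alpha> 0 \<beta> (\<phi> (tn n + r))) (at r)" by (rule sh)
          show "(z has_vector_derivative rhs \<alpha> 0 \<beta> (z r)) (at r)" using zder r s by (auto simp: \<delta>'_def)
        next
          fix r assume r: "r \<in> {0..s}"
          show "norm (\<phi> (tn n + r)) \<le> R" using phb r s by (auto simp: \<delta>'_def)
          show "norm (z r) \<le> R" using zbnd r s by (auto simp: \<delta>'_def)
        qed
        thus ?thesis using z(2) by simp
      qed
      have "(\<lambda>n. \<phi> (tn n) - q) \<longlonglongrightarrow> 0" using tnq by (simp only: LIM_zero_iff)
      hence nlim: "(\<lambda>n. norm (\<phi> (tn n) - q)) \<longlonglongrightarrow> 0" by (simp only: tendsto_norm_zero_iff)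
      have "(\<lambda>n. (norm (\<phi> (tn n) - q))^2 * exp (2 * L * s)) \<longlonglongrightarrow> 0^2 * exp (2 * L * s)"
        by (intro tendsto_intros nlim)
      hence hl: "(\<lambda>n. (norm (\<phi> (tn n) - q))^2 * exp (2 * L * s)) \<longlonglongrightarrow> 0" by simp
      have ev1: "eventually (\<lambda>n. (0::real) \<le> (norm (\<phi> (tn n + s) - z s))^2) sequentially" by simp
      have ev2: "eventually (\<lambda>n. (norm (\<phi> (tn n + s) - z s))^2 \<le> (norm (\<phi> (tn n) - q))^2 * exp (2 * L * s)) sequentially"
        using gw by simp
      have "(\<lambda>n. (norm (\<phi> (tn n + s) - z s))^2) \<longlonglongrightarrow> 0"
        by (rule tendsto_sandwich[OF ev1 ev2 tendsto_const hl])
      hence "(\<lambda>n. sqrt ((norm (\<phi> (tn n + s) - z s))^2)) \<longlonglongrightarrow> sqrt 0" by (rule tendsto_real_sqrt)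
      hence "(\<lambda>n. norm (\<phi> (tn n + s) - z s)) \<longlonglongrightarrow> 0" by simp
      hence "(\<lambda>n. \<phi> (tn n + s) - z s) \<longlonglongrightarrow> 0" by (simp add: tendsto_norm_zero_iff)
      hence conv: "(\<lambda>n. \<phi> (tn n + s)) \<longlonglongrightarrow> z s" by (simp add: LIM_zero_iff)
      have l1: "(\<lambda>n. Ef (tn n + s)) \<longlonglongrightarrow> En \<beta> (z s)"
        unfolding Ef_def by (rule isCont_tendsto_compose[OF En_cont[OF a(2)] conv])
      have ev3: "eventually (\<lambda>n. Ef (tn n) \<le> Ef (tn n + s)) sequentially" using Emono s by simp
      have ev4: "eventually (\<lambda>n. Ef (tn n + s) \<le> Eq) sequentially" using Ele by simp
      have l2: "(\<lambda>n. Ef (tn n + s)) \<longlonglongrightarrow> Eq"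
        by (rule tendsto_sandwich[OF ev3 ev4 Etn tendsto_const])
      show ?thesis using LIMSEQ_unique[OF l1 l2] .
    qed
    define U where "U = {0<..<\<delta>'}"
    have Uder: "(z has_vector_derivative rhs \<alpha> 0 \<beta> (z t)) (at t)" if "t \<in> U" for t
      using zder that unfolding U_def \<delta>'_def by auto
    have uz: "snd (snd (z t)) = 0" if "t \<in> U" for t
    proof -
      have "\<alpha> / \<beta> * (snd (snd (z t)))^2 = 0"
        by (rule zd[OF _ that _ En_deriv[OF Uder[OF that] a(2)]]) (use Ez in \<open>auto simp: U_def\<close>)
      thus ?thesis using a by simp
    qed
    have mid: "\<delta>'/2 \<in> U" unfolding U_def using \<delta>'0 by simp
    have e: "fst (snd (z (\<delta>'/2))) = 0 \<and> (fst (z (\<delta>'/2)) = 0 \<or> fst (z (\<delta>'/2)) = 1 \<or> fst (z (\<delta>'/2)) = -1)"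
      by (rule eqlem[OF _ mid a(2) Uder uz]) (simp add: U_def)
    have "En \<beta> (z (\<delta>'/2)) \<le> 0" using e uz[OF mid] by (intro En_eq) auto
    moreover have "En \<beta> (z (\<delta>'/2)) = Eq" using Ez[of "\<delta>'/2"] \<delta>'0 by simp
    ultimately show False using Eqpos by simp
  qed
qed


theorem lemma1:
  fixes \<alpha> lam \<beta> :: real and b :: ereal and \<phi> :: "real \<Rightarrow> real \<times> real \<times> real"
  assumes "\<alpha> > 0" and "lam = 0" and "\<beta> > 0"
    and sol: "solves_on \<alpha> lam \<beta> \<phi> {t. ereal t < b}"
    and maximal: "\<forall>c \<psi>. c > b \<longrightarrow> solves_on \<alpha> lam \<beta> \<psi> {t. ereal t < c}
                     \<longrightarrow> \<not> (\<forall>t. ereal t < b \<longrightarrow> \<psi> t = \<phi> t)"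
    and nontrivial: "\<exists>t. ereal t < b \<and> \<phi> t \<noteq> 0"
    and lim_x: "((\<lambda>t. fst (\<phi> t)) \<longlongrightarrow> 0) at_bot"
    and lim_theta: "((\<lambda>t. fst (snd (\<phi> t))) \<longlongrightarrow> 0) at_bot"
    and lim_u: "((\<lambda>t. snd (snd (\<phi> t))) \<longlongrightarrow> 0) at_bot"
  shows "filterlim (\<lambda>t. norm (\<phi> t)) at_top (right_end b)"
proof -
  have der0: "(\<phi> has_vector_derivative rhs \<alpha> 0 \<beta> (\<phi> t)) (at t)" if "ereal t < b" for t
    using sol that unfolding solves_on_def assms(2) by blast
  show ?thesis
  proof (cases b)
    case (real bb)
    have "filterlim (\<lambda>t. norm (\<phi> t)) at_top (at_left bb)"
    proof (rule finite_case[OF assms(1,3)])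
      fix t assume "t < bb"
      thus "(\<phi> has_vector_derivative rhs \<alpha> 0 \<beta> (\<phi> t)) (at t)" using der0 real by simp
    next
      show "\<forall>c \<psi>. c > ereal bb \<longrightarrow> solves_on \<alpha> 0 \<beta> \<psi> {t. ereal t < c}
                     \<longrightarrow> \<not> (\<forall>t. ereal t < ereal bb \<longrightarrow> \<psi> t = \<phi> t)"
        using maximal unfolding assms(2) real .
    qed
    thus ?thesis unfolding right_end_def real by simp
  next
    case PInf
    have "filterlim (\<lambda>t. norm (\<phi> t)) at_top at_top"
    proof (rule infinite_case[OF assms(1,3) _ _ lim_x lim_theta lim_u])
      fix t show "(\<phi> has_vector_derivative rhs \<alpha> 0 \<beta> (\<phi> t)) (at t)" using der0 PInf by simp
    next
      show "\<exists>t. \<phi> t \<noteq> 0" using nontrivial by blast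
    qed
    thus ?thesis unfolding right_end_def PInf by simp
  next
    case MInf
    thus ?thesis using nontrivial by simp
  qed
qed

end
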